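(* Let $A\subseteq\mathbb N_0\times\mathbb S$ be a Schnorr test for a computable forecasting system $\varphi$ such that $A_n$ is a partial cut for every $n\in\mathbb N_0$. Then there is a growth function $\varsigma:\mathbb N_0\to\mathbb N_0$ such that $$\sum_{n=0}^{\infty}2^{k}\,\overline P_\varphi\big([A_n^{\ge\varsigma(k)}]\big)\le2^{-k}\quad\text{for all }k\in\mathbb N_0.$$
   Context: $\mathbb N_0=\{0,1,\dots\}$; $\Omega=\{0,1\}^{\mathbb N}$; $\mathbb S$ finite binary strings, $|s|$ length, $\omega^n$ first $n$ entries; $[s]=\{\omega:\omega^{|s|}=s\}$, $[A]=\bigcup_{s\in A}[s]$; a partial cut is a prefix-free subset of $\mathbb S$. For $A\subseteq\mathbb N_0\times\mathbb S$: $A_n=\{s:(n,s)\in A\}$, $A_n^{<\ell}=\{s\in A_n:|s|<\ell\}$, $A_n^{\ge\ell}=\{s\in A_n:|s|\ge\ell\}$. $\mathcal I$: nonempty closed subintervals of $[0,1]$; $\overline E_I(f)=\max_{p\in I}[pf(1)+(1-p)f(0)]$. Forecasting system $\varphi:\mathbb S\to\mathcal I$, $\underline\varphi=\min\varphi$, $\overline\varphi=\max\varphi$; computable if $\underline\varphi,\overline\varphi$ are computable real maps (approximable by a recursive rational map to within $2^{-N}$). Supermartingale: $M:\mathbb S\to\mathbb R$ with $\overline E_{\varphi(s)}(M(s\,\cdot))\le M(s)$. $\overline P_\varphi(G)=\inf\{M(\square):M\text{ supermartingale for }\varphi,\ \liminf_nM(\omega^n)\ge\mathbb 1_G(\omega)\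 \forall\omega\}$. A Schnorr test for $\varphi$ is a recursive $A\subseteq\mathbb N_0\times\mathbb S$ with $\overline P_\varphi([A_n])\le2^{-n}$ for all $n$, and a recursive $e:\mathbb N_0^2\to\mathbb N_0$ with $\overline P_\varphi([A_n]\setminus[A_n^{<\ell}])\le2^{-N}$ for all $(N,n)$ and $\ell\ge e(N,n)$. A growth function is a recursive, non-decreasing, unbounded map $\mathbb N_0\to\mathbb N_0$. *)

theory Defs
  imports Complex_Main "HOL-Library.Extended_Real" "HOL-Library.Liminf_Limsup"
          "HOL-Library.Nat_Bijection" "HOL-Library.Indicator_Function"
begin

datatype recf = Zero | Succ | Proj nat | Comp recf "recf list" | Prec recf recf | Mn recf

inductive reval :: "recf \<Rightarrow> nat list \<Rightarrow> nat \<Rightarrow> bool" where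
  zero: "reval Zero xs 0"
| succ: "reval Succ (x # xs) (Suc x)"
| proj: "i < length xs \<Longrightarrow> reval (Proj i) xs (xs ! i)"
| comp: "list_all2 (\<lambda>g y. reval g xs y) gs ys \<Longrightarrow> reval f ys z \<Longrightarrow> reval (Comp f gs) xs z"
| prec0: "reval f xs y \<Longrightarrow> reval (Prec f g) (0 # xs) y"
| precS: "reval (Prec f g) (n # xs) y \<Longrightarrow> reval g (n # y # xs) z \<Longrightarrow> reval (Prec f g) (Suc n # xs) z"
| mn: "reval f (n # xs) 0 \<Longrightarrow> (\<forall>m<n. \<exists>y. reval f (m # xs) y \<and> y > 0) \<Longrightarrow> reval (Mn f) xs n"

definition str_code :: "bool list \<Rightarrow> nat" where
  "str_code s = list_encode (map (\<lambda>b. if b then 1 else 0) s)"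

definition recursive1 :: "(nat \<Rightarrow> nat) \<Rightarrow> bool" where
  "recursive1 f \<longleftrightarrow> (\<exists>p. \<forall>n. reval p [n] (f n))"

definition recursive2 :: "(nat \<Rightarrow> nat \<Rightarrow> nat) \<Rightarrow> bool" where
  "recursive2 f \<longleftrightarrow> (\<exists>p. \<forall>m n. reval p [m, n] (f m n))"

definition recursive_set :: "(nat \<times> bool list) set \<Rightarrow> bool" where
  "recursive_set A \<longleftrightarrow> (\<exists>p. \<forall>n s. reval p [n, str_code s] (if (n, s) \<in> A then 1 else 0))"

definition computable_real_map :: "(bool list \<Rightarrow> real) \<Rightarrow> bool" where
  "computable_real_map f \<longleftrightarrow>
     (\<exists>pa pb pc. \<forall>s N. \<exists>a b c. reval pa [str_code s, N] a \<and> reval pb [str_code s, N] b \<and>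
        reval pc [str_code s, N] c \<and>
        \<bar>(real a - real b) / (real c + 1) - f s\<bar> \<le> (1/2) ^ N)"

definition growth_function :: "(nat \<Rightarrow> nat) \<Rightarrow> bool" where
  "growth_function g \<longleftrightarrow> recursive1 g \<and> mono g \<and> (\<forall>m. \<exists>n. m \<le> g n)"

definition pref :: "(nat \<Rightarrow> bool) \<Rightarrow> nat \<Rightarrow> bool list" where
  "pref \<omega> n = map \<omega> [0..<n]"

definition cyl :: "bool list \<Rightarrow> (nat \<Rightarrow> bool) set" where
  "cyl s = {\<omega>. pref \<omega> (length s) = s}"

definition cylset :: "bool list set \<Rightarrow> (nat \<Rightarrow> bool) set" where
  "cylset A = (\<Union>s\<in>A. cyl s)"

definition partial_cut :: "bool list set \<Rightarrow> bool" where
  "partial_cut C \<longleftrightarrow> (\<forall>s\<in>C. \<forall>t\<in>C. (\<exists>u. t = s @ u) \<longrightarrow> s = t)"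

definition sec :: "(nat \<times> bool list) set \<Rightarrow> nat \<Rightarrow> bool list set" where
  "sec A n = {s. (n, s) \<in> A}"

definition sec_lt :: "(nat \<times> bool list) set \<Rightarrow> nat \<Rightarrow> nat \<Rightarrow> bool list set" where
  "sec_lt A n l = {s \<in> sec A n. length s < l}"

definition sec_ge :: "(nat \<times> bool list) set \<Rightarrow> nat \<Rightarrow> nat \<Rightarrow> bool list set" where
  "sec_ge A n l = {s \<in> sec A n. length s \<ge> l}"

definition forecasting_system :: "(bool list \<Rightarrow> real set) \<Rightarrow> bool" where
  "forecasting_system \<phi> \<longleftrightarrow> (\<forall>s. \<exists>a b. 0 \<le> a \<and> a \<le> b \<and> b \<le> 1 \<and> \<phi> s = {a..b})"

definition computable_fs :: "(bool list \<Rightarrow> real set) \<Rightarrow> bool" where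
  "computable_fs \<phi> \<longleftrightarrow> computable_real_map (\<lambda>s. Inf (\<phi> s)) \<and> computable_real_map (\<lambda>s. Sup (\<phi> s))"

definition upper_exp :: "real set \<Rightarrow> (bool \<Rightarrow> real) \<Rightarrow> real" where
  "upper_exp I f = Sup ((\<lambda>p. p * f True + (1 - p) * f False) ` I)"

definition supermartingale :: "(bool list \<Rightarrow> real set) \<Rightarrow> (bool list \<Rightarrow> real) \<Rightarrow> bool" where
  "supermartingale \<phi> M \<longleftrightarrow> (\<forall>s. upper_exp (\<phi> s) (\<lambda>x. M (s @ [x])) \<le> M s)"

definition upper_prob :: "(bool list \<Rightarrow> real set) \<Rightarrow> (nat \<Rightarrow> bool) set \<Rightarrow> ereal" where
  "upper_prob \<phi> G = Inf {ereal (M []) | M. supermartingale \<phi> M \<and>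
       (\<forall>\<omega>. liminf (\<lambda>n. ereal (M (pref \<omega> n))) \<ge> ereal (indicator G \<omega>))}"

definition schnorr_test :: "(bool list \<Rightarrow> real set) \<Rightarrow> (nat \<times> bool list) set \<Rightarrow> bool" where
  "schnorr_test \<phi> A \<longleftrightarrow> recursive_set A \<and>
     (\<forall>n. upper_prob \<phi> (cylset (sec A n)) \<le> ereal ((1/2) ^ n)) \<and>
     (\<exists>e. recursive2 e \<and> (\<forall>N n l. l \<ge> e N n \<longrightarrow>
        upper_prob \<phi> (cylset (sec A n) - cylset (sec_lt A n l)) \<le> ereal ((1/2) ^ N)))"

end

theory Submission imports Defs begin

lemma projI: "i < length xs \<Longrightarrow> y = xs ! i \<Longrightarrow> reval (Proj i) xs y"
  using reval.proj by simp

definition addP :: recf where "addP = Prec (Proj 0) (Comp Succ [Proj 1])"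

lemma addP: "reval addP [n, m] (n + m)"
proof (induction n)
  case 0 show ?case unfolding addP_def by (auto intro!: reval.prec0 projI)
next
  case (Suc n)
  have "reval (Comp Succ [Proj 1]) [n, n+m, m] (Suc (n+m))"
    by (rule reval.comp[where ys="[n+m]"]) (auto intro: projI reval.succ)
  then show ?case using Suc unfolding addP_def by (auto intro: reval.precS)
qed

definition sumP :: "recf \<Rightarrow> recf" where
  "sumP h = Prec Zero (Comp addP [Proj 1, Comp h [Proj 0, Proj 2]])"

lemma sumP:
  assumes "\<And>j x. reval h [j, x] (H j x)"
  shows "reval (sumP h) [k, x] (\<Sum>j<k. H j x)"
proof (induction k)
  case 0 show ?case unfolding sumP_def by (auto intro!: reval.prec0 reval.zero)
next
  case (Suc k)
  have "reval (Comp h [Proj 0, Proj 2]) [k, (\<Sum>j<k. H j x), x] (H k x)"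
    by (rule reval.comp[where ys="[k, x]"]) (auto intro: projI assms)
  then have "reval (Comp addP [Proj 1, Comp h [Proj 0, Proj 2]]) [k, (\<Sum>j<k. H j x), x] ((\<Sum>j<k. H j x) + H k x)"
    by (intro reval.comp[where ys="[(\<Sum>j<k. H j x), H k x]"]) (auto intro: projI addP)
  then show ?case using Suc unfolding sumP_def by (auto intro: reval.precS)
qed

lemma comp1: "reval g xs y \<Longrightarrow> reval f [y] z \<Longrightarrow> reval (Comp f [g]) xs z"
  by (rule reval.comp[where ys="[y]"]) auto

lemma comp2: "reval g1 xs y1 \<Longrightarrow> reval g2 xs y2 \<Longrightarrow> reval f [y1, y2] z \<Longrightarrow> reval (Comp f [g1, g2]) xs z"
  by (rule reval.comp[where ys="[y1, y2]"]) auto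

lemma compS: "reval g xs y \<Longrightarrow> reval (Comp Succ [g]) xs (Suc y)"
  by (rule comp1) (auto intro: reval.succ)

definition sigf :: "(nat \<Rightarrow> nat \<Rightarrow> nat) \<Rightarrow> nat \<Rightarrow> nat" where
  "sigf e k = k + (\<Sum>j<Suc k. \<Sum>n<2*j+2. e (n + 2*j + 2) n)"

lemma sig_rec:
  assumes "recursive2 e"
  shows "recursive1 (sigf e)"
proof -
  obtain p where p: "\<And>m n. reval p [m, n] (e m n)" using assms unfolding recursive2_def by blast
  define dbl where "dbl = Comp addP [Proj 0, Proj 0]"
  have dbl0: "reval dbl [y] (y + y)" for y unfolding dbl_def by (rule comp2) (auto intro!: projI addP)
  have dbl: "reval g xs y \<Longrightarrow> reval (Comp dbl [g]) xs (2*y)" for g xs y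
    using dbl0[of y] by (auto intro: comp1 simp: mult_2)
  define eP where "eP = Comp p [Comp Succ [Comp Succ [Comp addP [Proj 0, Comp dbl [Proj 1]]]], Proj 0]"
  have eP: "reval eP [n, j] (e (n + 2*j + 2) n)" for n j
  proof -
    have "reval (Comp addP [Proj 0, Comp dbl [Proj 1]]) [n,j] (n + (j+j))"
      by (rule comp2) (auto intro!: projI comp1[OF _ dbl0] addP)
    then have "reval (Comp Succ [Comp Succ [Comp addP [Proj 0, Comp dbl [Proj 1]]]]) [n,j] (Suc (Suc (n + (j+j))))"
      by (intro compS)
    moreover have "Suc (Suc (n + (j+j))) = n + 2*j + 2" by simp
    ultimately show ?thesis unfolding eP_def by (intro comp2[OF _ _ p]) (auto intro: projI)
  qed
  define TP where "TP = Comp (sumP eP) [Comp Succ [Comp Succ [Comp dbl [Proj 0]]], Proj 0]"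
  have TP: "reval TP [j, x] (\<Sum>n<2*j+2. e (n + 2*j + 2) n)" for j x
  proof -
    have "reval (Comp Succ [Comp Succ [Comp dbl [Proj 0]]]) [j,x] (Suc (Suc (j+j)))"
      by (intro compS comp1[OF _ dbl0] projI) auto
    moreover have "Suc (Suc (j+j)) = 2*j+2" by simp
    ultimately show ?thesis unfolding TP_def by (intro comp2[OF _ _ sumP[OF eP]]) (auto intro: projI)
  qed
  define SP where "SP = Comp addP [Proj 0, Comp (sumP TP) [Comp Succ [Proj 0], Zero]]"
  have "reval SP [k] (sigf e k)" for k
    unfolding SP_def sigf_def
    by (rule comp2) (auto intro!: comp1 comp2 projI reval.succ reval.zero addP sumP[OF TP])
  then show ?thesis unfolding recursive1_def by blast
qed


lemma child_le:
  assumes fs: "forecasting_system \<phi>" and sm: "supermartingale \<phi> M"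
  shows "\<exists>x. M (s @ [x]) \<le> M s"
proof (rule ccontr)
  assume "\<not> ?thesis"
  then have T: "M (s @ [True]) > M s" and F: "M (s @ [False]) > M s"
    by (meson not_le)+
  obtain a b where ab: "0 \<le> a" "a \<le> b" "b \<le> 1" "\<phi> s = {a..b}" using fs unfolding forecasting_system_def by blast
  let ?f = "\<lambda>x. M (s @ [x])"
  have bdd: "bdd_above ((\<lambda>p. p * ?f True + (1 - p) * ?f False) ` \<phi> s)"
  proof (rule bdd_aboveI2)
    fix p assume "p \<in> \<phi> s"
    then have p: "0 \<le> p" "p \<le> 1" using ab by auto
    have "p * ?f True \<le> p * \<bar>?f True\<bar>" using p by (intro mult_left_mono) auto
    also have "\<dots> \<le> \<bar>?f True\<bar>" using p by (intro mult_left_le_one_le) auto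
    finally have 1: "p * ?f True \<le> \<bar>?f True\<bar>" .
    have "(1-p) * ?f False \<le> (1-p) * \<bar>?f False\<bar>" using p by (intro mult_left_mono) auto
    also have "\<dots> \<le> \<bar>?f False\<bar>" using p by (intro mult_left_le_one_le) auto
    finally have 2: "(1-p) * ?f False \<le> \<bar>?f False\<bar>" .
    from 1 2 show "p * ?f True + (1 - p) * ?f False \<le> \<bar>?f True\<bar> + \<bar>?f False\<bar>" by linarith
  qed
  have "a \<in> \<phi> s" using ab by auto
  then have "a * ?f True + (1 - a) * ?f False \<le> upper_exp (\<phi> s) ?f"
    unfolding upper_exp_def by (intro cSup_upper bdd) auto
  also have "\<dots> \<le> M s" using sm unfolding supermartingale_def by blast
  finally have le: "a * ?f True + (1 - a) * ?f False \<le> M s" .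
  have a1: "0 \<le> a" "a \<le> 1" using ab by auto
  have "a * (?f True - M s) + (1 - a) * (?f False - M s) > 0"
  proof (cases "a = 0")
    case True then show ?thesis using F by simp
  next
    case False
    then have "a * (?f True - M s) > 0" using a1 T by simp
    moreover have "(1 - a) * (?f False - M s) \<ge> 0" using a1 F by simp
    ultimately show ?thesis by linarith
  qed
  then show False using le by (simp add: algebra_simps)
qed

lemma pref_Suc: "pref \<omega> (Suc n) = pref \<omega> n @ [\<omega> n]"
  unfolding pref_def by simp

lemma up_nonneg:
  assumes fs: "forecasting_system \<phi>"
  shows "0 \<le> upper_prob \<phi> G"
  unfolding upper_prob_def
proof (rule Inf_greatest, clarify)
  fix M assume sm: "supermartingale \<phi> M"
    and lim: "\<forall>\<omega>. ereal (indicator G \<omega>) \<le> liminf (\<lambda>n. ereal (M (pref \<omega> n)))"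
  define c where "c s = (SOME x. M (s @ [x]) \<le> M s)" for s
  have c: "M (s @ [c s]) \<le> M s" for s
    unfolding c_def by (rule someI_ex) (rule child_le[OF fs sm])
  define pre where "pre = rec_nat [] (\<lambda>n s. s @ [c s])"
  have pre0: "pre 0 = []" and preS: "pre (Suc n) = pre n @ [c (pre n)]" for n
    unfolding pre_def by simp_all
  define \<omega> where "\<omega> n = c (pre n)" for n
  have pp: "pref \<omega> n = pre n" for n
    by (induction n) (auto simp: pref_Suc pre0 preS \<omega>_def pref_def)
  have mle: "M (pre n) \<le> M []" for n
  proof (induction n)
    case 0 then show ?case by (simp add: pre0)
  next
    case (Suc n) then show ?case using c[of "pre n"] by (simp add: preS)
  qed
  have "liminf (\<lambda>n. ereal (M (pref \<omega> n))) \<le> liminf (\<lambda>n. ereal (M []))"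
    by (intro Liminf_mono) (auto simp: pp mle)
  also have "\<dots> = ereal (M [])" by (simp add: Liminf_const)
  finally have "ereal (indicator G \<omega>) \<le> ereal (M [])" using lim order_trans by blast
  then have "indicator G \<omega> \<le> M []" by simp
  moreover have "0 \<le> (indicator G \<omega> :: real)" by (simp add: indicator_def)
  ultimately show "0 \<le> ereal (M [])" by (simp only: zero_ereal_def ereal_less_eq(3))
qed

lemma up_mono:
  assumes "G \<subseteq> H"
  shows "upper_prob \<phi> G \<le> upper_prob \<phi> H"
  unfolding upper_prob_def
proof (rule Inf_superset_mono, clarify)
  fix M assume sm: "supermartingale \<phi> M"
    and lim: "\<forall>\<omega>. ereal (indicator H \<omega>) \<le> liminf (\<lambda>n. ereal (M (pref \<omega> n)))"
  have "\<forall>\<omega>. ereal (indicator G \<omega>) \<le> liminf (\<lambda>n. ereal (M (pref \<omega> n)))"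
  proof
    fix \<omega>
    have "indicator G \<omega> \<le> (indicator H \<omega> :: real)" using assms by (auto simp: indicator_def)
    then show "ereal (indicator G \<omega>) \<le> liminf (\<lambda>n. ereal (M (pref \<omega> n)))"
      using lim[rule_format, of \<omega>] by (meson ereal_less_eq(3) order.trans)
  qed
  then show "\<exists>M'. ereal (M []) = ereal (M' []) \<and> supermartingale \<phi> M' \<and>
      (\<forall>\<omega>. ereal (indicator G \<omega>) \<le> liminf (\<lambda>n. ereal (M' (pref \<omega> n))))"
    using sm by blast
qed

lemma cut_subset:
  assumes "partial_cut (sec A n)"
  shows "cylset (sec_ge A n l) \<subseteq> cylset (sec A n) - cylset (sec_lt A n l)"
proof
  fix \<omega> assume "\<omega> \<in> cylset (sec_ge A n l)"
  then obtain s where s: "s \<in> sec A n" "length s \<ge> l" "\<omega> \<in> cyl s"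
    unfolding cylset_def sec_ge_def by auto
  show "\<omega> \<in> cylset (sec A n) - cylset (sec_lt A n l)"
  proof
    show "\<omega> \<in> cylset (sec A n)" using s unfolding cylset_def by auto
    show "\<omega> \<notin> cylset (sec_lt A n l)"
    proof
      assume "\<omega> \<in> cylset (sec_lt A n l)"
      then obtain t where t: "t \<in> sec A n" "length t < l" "\<omega> \<in> cyl t"
        unfolding cylset_def sec_lt_def by auto
      have ps: "pref \<omega> (length s) = s" and pt: "pref \<omega> (length t) = t"
        using s t unfolding cyl_def by auto
      have "take (length t) s = t"
      proof -
        have le: "length t \<le> length s" using s(2) t(2) by simp
        have "take (length t) s = take (length t) (pref \<omega> (length s))" using ps by simp
        also have "\<dots> = pref \<omega> (length t)" unfolding pref_def using le by (simp add: take_map)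
        finally show ?thesis using pt by simp
      qed
      then have "s = t @ drop (length t) s" by (metis append_take_drop_id)
      then have "t = s" using assms t(1) s(1) unfolding partial_cut_def by blast
      then show False using s(2) t(2) by simp
    qed
  qed
qed


lemma geo_bound:
  fixes c :: nat
  defines "b \<equiv> \<lambda>n. if n < c then (1/2::real)^(n+c) else (1/2)^n"
  shows "summable b" "suminf b \<le> 4 * (1/2)^c"
proof -
  have bl: "b n \<le> (1/2)^n" for n unfolding b_def by (auto simp: power_add power_le_one)
  have b0: "0 \<le> b n" for n unfolding b_def by auto
  show sb: "summable b"
    by (rule summable_comparison_test[OF _ summable_geometric[of "1/2::real"]]) (use bl b0 in auto)
  have "suminf b = (\<Sum>n. b (n + c)) + (\<Sum>i<c. b i)" by (rule suminf_split_initial_segment[OF sb])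
  also have "(\<Sum>n. b (n + c)) = (\<Sum>n. (1/2)^c * (1/2::real)^n)"
    unfolding b_def by (simp add: power_add mult.commute)
  also have "\<dots> = (1/2)^c * 2"
    by (subst suminf_mult) (simp_all add: summable_geometric suminf_geometric)
  also have "(\<Sum>i<c. b i) = (\<Sum>i<c. (1/2)^c * (1/2::real)^i)"
    unfolding b_def by (intro sum.cong) (auto simp: power_add mult.commute)
  also have "\<dots> = (1/2)^c * (\<Sum>i<c. (1/2::real)^i)" by (simp add: sum_distrib_left)
  also have "(\<Sum>i<c. (1/2::real)^i) \<le> (\<Sum>i. (1/2::real)^i)"
    by (intro sum_le_suminf summable_geometric) auto
  also have "(\<Sum>i. (1/2::real)^i) = 2" by (simp add: suminf_geometric)
  finally show "suminf b \<le> 4 * (1/2)^c" by simp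
qed

theorem lemma8p4:
  fixes \<phi> :: "bool list \<Rightarrow> real set" and A :: "(nat \<times> bool list) set"
  assumes "forecasting_system \<phi>" and "computable_fs \<phi>"
    and "schnorr_test \<phi> A"
    and "\<forall>n. partial_cut (sec A n)"
  shows "\<exists>\<sigma>. growth_function \<sigma> \<and>
    (\<forall>k. (\<Sum>n. ereal (2 ^ k) * upper_prob \<phi> (cylset (sec_ge A n (\<sigma> k)))) \<le> ereal ((1/2) ^ k))"
proof -
  obtain e where er: "recursive2 e" and eb: "\<And>N n l. l \<ge> e N n \<Longrightarrow>
        upper_prob \<phi> (cylset (sec A n) - cylset (sec_lt A n l)) \<le> ereal ((1/2) ^ N)"
    using assms(3) unfolding schnorr_test_def by blast
  have ab: "\<And>n. upper_prob \<phi> (cylset (sec A n)) \<le> ereal ((1/2) ^ n)"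
    using assms(3) unfolding schnorr_test_def by blast
  let ?s = "sigf e"
  have gf: "growth_function ?s"
    unfolding growth_function_def
  proof (intro conjI allI)
    show "recursive1 ?s" by (rule sig_rec[OF er])
    show "mono ?s" unfolding mono_def sigf_def
    proof (intro allI impI add_mono)
      fix x y :: nat assume "x \<le> y"
      then show "(\<Sum>j<Suc x. \<Sum>n<2*j+2. e (n + 2*j + 2) n) \<le> (\<Sum>j<Suc y. \<Sum>n<2*j+2. e (n + 2*j + 2) n)"
        by (intro sum_mono2) auto
    qed
    fix m show "\<exists>n. m \<le> ?s n" by (rule exI[of _ m]) (simp add: sigf_def)
  qed
  have bound: "(\<Sum>n. ereal (2 ^ k) * upper_prob \<phi> (cylset (sec_ge A n (?s k)))) \<le> ereal ((1/2) ^ k)" for k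
  proof -
    define c where "c = 2*k+2"
    define b where "b = (\<lambda>n. if n < c then (1/2::real)^(n+c) else (1/2)^n)"
    have sb: "summable b" and sbb: "suminf b \<le> 4 * (1/2)^c"
      using geo_bound[of c] unfolding b_def by auto
    have Pb: "upper_prob \<phi> (cylset (sec_ge A n (?s k))) \<le> ereal (b n)" for n
    proof (cases "n < c")
      case True
      have "e (n + 2*k + 2) n \<le> (\<Sum>n<2*k+2. e (n + 2*k + 2) n)"
        using True unfolding c_def by (intro member_le_sum) auto
      also have "\<dots> \<le> (\<Sum>j<Suc k. \<Sum>n<2*j+2. e (n + 2*j + 2) n)"
        by (rule member_le_sum[where f="\<lambda>j. \<Sum>n<2*j+2. e (n + 2*j + 2) n"]) auto
      also have "\<dots> \<le> ?s k" unfolding sigf_def by simp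
      finally have le: "e (n + c) n \<le> ?s k" unfolding c_def by (simp add: add.assoc)
      have "upper_prob \<phi> (cylset (sec_ge A n (?s k))) \<le>
            upper_prob \<phi> (cylset (sec A n) - cylset (sec_lt A n (?s k)))"
        by (rule up_mono[OF cut_subset]) (use assms(4) in blast)
      also have "\<dots> \<le> ereal ((1/2)^(n+c))" by (rule eb[OF le])
      finally show ?thesis using True unfolding b_def by simp
    next
      case False
      have "upper_prob \<phi> (cylset (sec_ge A n (?s k))) \<le> upper_prob \<phi> (cylset (sec A n))"
        by (rule up_mono) (auto simp: cylset_def sec_ge_def)
      also have "\<dots> \<le> ereal ((1/2)^n)" by (rule ab)
      finally show ?thesis using False unfolding b_def by simp
    qed
    have "(\<Sum>n. ereal (2 ^ k) * upper_prob \<phi> (cylset (sec_ge A n (?s k)))) \<le> (\<Sum>n. ereal (2^k * b n))"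
    proof (rule suminf_le_pos)
      fix n
      show "ereal (2 ^ k) * upper_prob \<phi> (cylset (sec_ge A n (?s k))) \<le> ereal (2^k * b n)"
        using ereal_mult_left_mono[OF Pb[of n], of "ereal (2^k)"] by simp
      show "0 \<le> ereal (2 ^ k) * upper_prob \<phi> (cylset (sec_ge A n (?s k)))"
        using up_nonneg[OF assms(1)] by simp
    qed
    also have "(\<Sum>n. ereal (2^k * b n)) = ereal (\<Sum>n. 2^k * b n)"
      using sums_ereal[THEN iffD2, OF summable_sums[OF summable_mult[OF sb]]] by (simp add: sums_unique[symmetric])
    also have "(\<Sum>n. 2^k * b n) = 2^k * suminf b" by (rule suminf_mult[OF sb])
    also have "\<dots> \<le> 2^k * (4 * (1/2)^c)" using sbb by simp
    also have "\<dots> = (1/2)^k" unfolding c_def by (simp add: power_add power_mult_distrib field_simps power_mult power2_eq_square)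
    finally show ?thesis by simp
  qed
  show ?thesis using gf bound by blast
qed

end
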